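(* Assume (A2)–(A4). Then for every $n\ge0$ and all $(x,t)\in K_{R^*,T^*}$, $\partial_t\phi_n(x,t)\ge(1+\varepsilon_0)|\partial_x\phi_n(x,t)|$ and $\partial_t\psi_n(x,t)\ge(1+\varepsilon_0)|\partial_x\psi_n(x,t)|$.
   Context: Let $p>1$ and $\mu>0$ with $p<1+2/\mu$, and let $R^*,T^*>0$. Write $B_R=\{x\in\mathbb{R}:|x|<R\}$. Fix constants $\gamma_1,\gamma_2>0$ with $\gamma_1+\gamma_2>\max\big(1,(\mu p 2^p)^{1/(p-1)}\big)$ (standing assumption). Assumptions on the real functions $f,g$: (A2) $f\ge\gamma_1$, $g\ge\gamma_2$ on $B_{R^*+T^*}$. (A3) $f,g\in\mathcal{C}^4(\overline{B_{R^*+T^*}})$. (A4) There is $\varepsilon_0>0$ with $2^{-p}(\gamma_1+\gamma_2)^p-\frac{\mu}{2}(\gamma_1+\gamma_2)\ge(2+\varepsilon_0)\max_{x\in B_{R^*+T^*}}(|f'(x)|+|g'(x)|)$. Let $K_{R^*,T^*}=\{(x,t):t>0,\ |x-x_0|<T^*-t\ \text{for some } x_0\in B_{R^*}\}$. Define iterates $\phi_0\equiv\gamma_1$, $\psi_0\equiv\gamma_2$ and, with $\mathcal{N}_n(x,s)=2^{-p}|\phi_n+\psi_n|^p(x,s)-\frac{\mu}{1+s}\frac{(\phi_n+\psi_n)(x,s)}{2}$, $\phi_{n+1}(x,t)=f(x+t)+\int_0^t\mathcal{N}_n(x+t-s,s)\,ds$, $\psi_{n+1}(x,t)=g(x-t)+\int_0^t\mathcal{N}_n(x-t+s,s)\,ds$.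 *)

theory Defs
  imports "HOL-Analysis.Analysis"
begin

definition C4_on :: "real set \<Rightarrow> (real \<Rightarrow> real) \<Rightarrow> bool" where
  "C4_on S f \<longleftrightarrow> (\<exists>F :: nat \<Rightarrow> real \<Rightarrow> real. F 0 = f \<and>
      (\<forall>k<4. \<forall>x\<in>S. (F k has_real_derivative F (Suc k) x) (at x within S)) \<and>
      continuous_on S (F 4))"

definition Nl :: "real \<Rightarrow> real \<Rightarrow> (real \<Rightarrow> real \<Rightarrow> real) \<Rightarrow> (real \<Rightarrow> real \<Rightarrow> real)
    \<Rightarrow> real \<Rightarrow> real \<Rightarrow> real" where
  "Nl p \<mu> \<phi> \<psi> y s = 2 powr (-p) * \<bar>\<phi> y s + \<psi> y s\<bar> powr p
      - \<mu> / (1 + s) * ((\<phi> y s + \<psi> y s) / 2)"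

primrec iter :: "real \<Rightarrow> real \<Rightarrow> (real \<Rightarrow> real) \<Rightarrow> (real \<Rightarrow> real) \<Rightarrow> real \<Rightarrow> real \<Rightarrow> nat
    \<Rightarrow> (real \<Rightarrow> real \<Rightarrow> real) \<times> (real \<Rightarrow> real \<Rightarrow> real)" where
  "iter p \<mu> f g \<gamma>1 \<gamma>2 0 = ((\<lambda>x t. \<gamma>1), (\<lambda>x t. \<gamma>2))"
| "iter p \<mu> f g \<gamma>1 \<gamma>2 (Suc n) =
     (let \<phi> = fst (iter p \<mu> f g \<gamma>1 \<gamma>2 n); \<psi> = snd (iter p \<mu> f g \<gamma>1 \<gamma>2 n) in
      ((\<lambda>x t. f (x + t) + integral {0..t} (\<lambda>s. Nl p \<mu> \<phi> \<psi> (x + t - s) s)),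
       (\<lambda>x t. g (x - t) + integral {0..t} (\<lambda>s. Nl p \<mu> \<phi> \<psi> (x - t + s) s))))"

definition phi where "phi p \<mu> f g \<gamma>1 \<gamma>2 n = fst (iter p \<mu> f g \<gamma>1 \<gamma>2 n)"
definition psi where "psi p \<mu> f g \<gamma>1 \<gamma>2 n = snd (iter p \<mu> f g \<gamma>1 \<gamma>2 n)"

definition Kcone :: "real \<Rightarrow> real \<Rightarrow> (real \<times> real) set" where
  "Kcone R T = {(x, t). t > 0 \<and> (\<exists>x0. \<bar>x0\<bar> < R \<and> \<bar>x - x0\<bar> < T - t)}"

end

theory Submission
  imports Defs
begin

lemma bl2: "bounded_linear (\<lambda>v::real\<times>real. a * fst v + b * snd v)"
  by (auto intro!: bounded_linear_intros)

lemma leibniz2: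
  fixes f A B :: "real \<times> real \<Rightarrow> real \<Rightarrow> real"
  assumes fx: "\<And>z r. z \<in> U \<Longrightarrow> r \<in> {0..1} \<Longrightarrow>
      ((\<lambda>z. f z r) has_derivative (\<lambda>v. A z r * fst v + B z r * snd v)) (at z within U)"
    and fc: "\<And>z. z \<in> U \<Longrightarrow> continuous_on {0..1} (f z)"
    and cA: "continuous_on (U \<times> {0..1}) (\<lambda>w. A (fst w) (snd w))"
    and cB: "continuous_on (U \<times> {0..1}) (\<lambda>w. B (fst w) (snd w))"
    and z0: "z0 \<in> U" and cv: "convex U"
  shows "((\<lambda>z. integral {0..1} (f z)) has_derivative
     (\<lambda>v. integral {0..1} (A z0) * fst v + integral {0..1} (B z0) * snd v)) (at z0 within U)"
proof -
  define BL where "BL z r = Blinfun (\<lambda>v::real\<times>real. A z r * fst v + B z r * snd v)" for z r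
  have BLa: "blinfun_apply (BL z r) = (\<lambda>v. A z r * fst v + B z r * snd v)" for z r
    unfolding BL_def by (rule bounded_linear_Blinfun_apply[OF bl2])
  have cBL: "continuous_on (U \<times> cbox 0 1) (\<lambda>(z, r). BL z r)"
  proof (rule continuous_on_blinfun_componentwise)
    fix i :: "real \<times> real" assume "i \<in> Basis"
    then have "i = (1,0) \<or> i = (0,1)" by (auto simp: Basis_prod_def)
    then show "continuous_on (U \<times> cbox 0 1) (\<lambda>x. blinfun_apply (case x of (z, r) \<Rightarrow> BL z r) i)"
      using cA cB by (auto simp: BLa split_beta)
  qed
  have L: "((\<lambda>z. integral (cbox 0 1) (f z)) has_derivative blinfun_apply (integral (cbox 0 1) (BL z0))) (at z0 within U)"
    apply (rule leibniz_rule[OF _ _ cBL z0 cv])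
    using fx fc by (auto simp: BLa intro: integrable_continuous_interval)
  have cBL0: "continuous_on (cbox 0 1) (BL z0)"
    by (rule continuous_on_compose2[OF cBL, of _ "\<lambda>r. (z0, r)", simplified]) (use z0 in \<open>auto intro!: continuous_intros\<close>)
  have "blinfun_apply (integral (cbox 0 1) (BL z0)) v = integral {0..1} (A z0) * fst v + integral {0..1} (B z0) * snd v" for v
  proof -
    have iA: "A z0 integrable_on {0..1}"
      by (rule integrable_continuous_interval, rule continuous_on_compose2[OF cA, of _ "\<lambda>r. (z0, r)", simplified]) (use z0 in \<open>auto intro!: continuous_intros\<close>)
    have iB: "B z0 integrable_on {0..1}"
      by (rule integrable_continuous_interval, rule continuous_on_compose2[OF cB, of _ "\<lambda>r. (z0, r)", simplified]) (use z0 in \<open>auto intro!: continuous_intros\<close>)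
    have "blinfun_apply (integral (cbox 0 1) (BL z0)) v = integral (cbox 0 1) (\<lambda>r. BL z0 r v)"
      by (rule blinfun_apply_integral, rule integrable_continuous[OF cBL0])
    also have "\<dots> = integral {0..1} (\<lambda>r. A z0 r * fst v + B z0 r * snd v)"
      by (simp add: BLa)
    also have "\<dots> = integral {0..1} (A z0) * fst v + integral {0..1} (B z0) * snd v"
      using iA iB by (simp add: integral_add integrable_on_mult_left)
    finally show ?thesis .
  qed
  then have E: "blinfun_apply (integral (cbox 0 1) (BL z0)) = (\<lambda>v. integral {0..1} (A z0) * fst v + integral {0..1} (B z0) * snd v)"
    by (rule ext)
  have "cbox 0 (1::real) = {0..1}" by simp
  with L E show ?thesis by metis
qed

definition SS :: "real \<Rightarrow> (real \<times> real) set" where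
  "SS c = {z. 0 \<le> snd z \<and> \<bar>fst z\<bar> + snd z \<le> c}"

lemma convex_SS: "convex (SS c)"
proof -
  have "SS c = {z. inner (0::real,-1::real) z \<le> 0} \<inter> {z. inner (1::real,1::real) z \<le> c} \<inter> {z. inner (-1::real,1::real) z \<le> c}"
    by (auto simp: SS_def inner_prod_def abs_if)
  then show ?thesis by (auto intro!: convex_Int convex_halfspace_le)
qed

definition HH :: "real \<Rightarrow> real \<Rightarrow> (real \<Rightarrow> real \<Rightarrow> real) \<Rightarrow> (real \<Rightarrow> real \<Rightarrow> real)
   \<Rightarrow> (real \<Rightarrow> real \<Rightarrow> real) \<Rightarrow> real \<Rightarrow> bool" where
  "HH c eps P Px Pt \<gamma> \<longleftrightarrow>
    (\<forall>y s. (y,s) \<in> SS c \<longrightarrow> ((\<lambda>z. P (fst z) (snd z)) has_derivative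
        (\<lambda>v. Px y s * fst v + Pt y s * snd v)) (at (y,s) within SS c)) \<and>
    continuous_on (SS c) (\<lambda>z. Px (fst z) (snd z)) \<and>
    continuous_on (SS c) (\<lambda>z. Pt (fst z) (snd z)) \<and>
    (\<forall>y s. (y,s) \<in> SS c \<longrightarrow> \<gamma> \<le> P y s \<and> (1 + eps) * \<bar>Px y s\<bar> \<le> Pt y s)"

lemma final_arith:
  fixes a m0 t IA IC e :: real
  assumes "(2+e) * \<bar>a\<bar> \<le> m0" "(1+e) * \<bar>IA\<bar> \<le> IC" "0 \<le> t" "0 \<le> e"
  shows "(1+e) * \<bar>a + t * IA\<bar> \<le> a + m0 + t * IC"
proof -
  have tri: "\<bar>a + t * IA\<bar> \<le> \<bar>a\<bar> + t * \<bar>IA\<bar>" using assms(3) by (simp add: abs_triangle_ineq[THEN order_trans] abs_mult)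
  have "(1+e) * \<bar>a + t * IA\<bar> \<le> (1+e) * \<bar>a\<bar> + t * ((1+e) * \<bar>IA\<bar>)"
    using mult_left_mono[OF tri, of "1+e"] assms(4) by (simp add: algebra_simps)
  also have "\<dots> \<le> (1+e) * \<bar>a\<bar> + t * IC" using assms(2,3) by (simp add: mult_left_mono)
  also have "\<dots> \<le> a + m0 + t * IC" using assms(1) by (simp add: algebra_simps abs_if split: if_splits)
  finally show ?thesis .
qed

lemma SS_L:
  assumes "z \<in> SS c" "r \<in> {0..1::real}"
  shows "(fst z + snd z - snd z * r, snd z * r) \<in> SS c"
proof -
  obtain x t where z: "z = (x,t)" by (cases z)
  have t: "0 \<le> t" "\<bar>x\<bar> + t \<le> c" using assms(1) by (auto simp: SS_def z)
  have "0 \<le> t*r" "t*r \<le> t" using assms(2) t by (auto simp: mult_left_le)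
  moreover have "\<bar>x + (t - t*r)\<bar> \<le> \<bar>x\<bar> + \<bar>t - t*r\<bar>" by (rule abs_triangle_ineq)
  ultimately show ?thesis using t by (auto simp: SS_def z algebra_simps)
qed

lemma char_step:
  fixes c eps \<gamma> :: real and N N1 N2 :: "real \<Rightarrow> real \<Rightarrow> real" and F F' :: "real \<Rightarrow> real"
  assumes ND: "\<And>y s. (y,s) \<in> SS c \<Longrightarrow> ((\<lambda>z. N (fst z) (snd z)) has_derivative
        (\<lambda>v. N1 y s * fst v + N2 y s * snd v)) (at (y,s) within SS c)"
    and cN1: "continuous_on (SS c) (\<lambda>z. N1 (fst z) (snd z))"
    and cN2: "continuous_on (SS c) (\<lambda>z. N2 (fst z) (snd z))"
    and Npos: "\<And>y s. (y,s) \<in> SS c \<Longrightarrow> 0 \<le> N y s"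
    and Nineq: "\<And>y s. (y,s) \<in> SS c \<Longrightarrow> (1+eps) * \<bar>N1 y s\<bar> \<le> N2 y s"
    and dF: "\<And>y. \<bar>y\<bar> \<le> c \<Longrightarrow> (F has_real_derivative F' y) (at y)"
    and cF: "continuous_on {-c..c} F'"
    and Fge: "\<And>y. \<bar>y\<bar> \<le> c \<Longrightarrow> \<gamma> \<le> F y"
    and Bd: "\<And>y. \<bar>y\<bar> \<le> c \<Longrightarrow> (2+eps) * \<bar>F' y\<bar> \<le> N y 0"
    and eps: "0 \<le> eps"
  shows "HH c eps (\<lambda>x t. F (x+t) + integral {0..t} (\<lambda>s. N (x+t-s) s))
     (\<lambda>x t. F' (x+t) + t * integral {0..1} (\<lambda>r. N1 (x+t-t*r) (t*r)))
     (\<lambda>x t. F' (x+t) + integral {0..1} (\<lambda>r. N (x+t-t*r) (t*r))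
          + t * integral {0..1} (\<lambda>r. N1 (x+t-t*r) (t*r) * (1-r) + N2 (x+t-t*r) (t*r) * r)) \<gamma>"
proof -
  define Nf where "Nf = (\<lambda>z r. N (fst z + snd z - snd z * r) (snd z * r))"
  define A where "A = (\<lambda>z r. N1 (fst z + snd z - snd z * r) (snd z * r))"
  define C where "C = (\<lambda>z r. N2 (fst z + snd z - snd z * r) (snd z * r))"
  define B where "B = (\<lambda>z r. A z r * (1-r) + C z r * r)"
  have ND': "((\<lambda>z. N (fst z) (snd z)) has_derivative
        (\<lambda>v. N1 (fst w) (snd w) * fst v + N2 (fst w) (snd w) * snd v)) (at w within SS c)"
    if "w \<in> SS c" for w
    using ND[of "fst w" "snd w"] that by simp
  have contN: "continuous_on (SS c) (\<lambda>z. N (fst z) (snd z))"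
    by (rule has_derivative_continuous_on, rule ND')
  have compc: "continuous_on (SS c \<times> {0..1})
      (\<lambda>w. h (fst (fst w) + snd (fst w) - snd (fst w) * snd w, snd (fst w) * snd w))"
    if h: "continuous_on (SS c) h" for h
    apply (rule continuous_on_compose2[OF h])
     apply (auto intro!: continuous_intros)
    using SS_L by fastforce
  have cNf: "continuous_on (SS c \<times> {0..1}) (\<lambda>w. Nf (fst w) (snd w))"
    using compc[OF contN] by (simp add: Nf_def)
  have cA: "continuous_on (SS c \<times> {0..1}) (\<lambda>w. A (fst w) (snd w))"
    using compc[OF cN1] by (simp add: A_def)
  have cC: "continuous_on (SS c \<times> {0..1}) (\<lambda>w. C (fst w) (snd w))"
    using compc[OF cN2] by (simp add: C_def)
  have cB: "continuous_on (SS c \<times> {0..1}) (\<lambda>w. B (fst w) (snd w))"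
    unfolding B_def by (intro continuous_intros cA cC)
  have slice: "continuous_on {0..1} (G z)"
    if "z \<in> SS c" "continuous_on (SS c \<times> {0..1}) (\<lambda>w. G (fst w) (snd w))" for z and G :: "real \<times> real \<Rightarrow> real \<Rightarrow> real"
    by (rule continuous_on_compose2[OF that(2), of _ "\<lambda>r. (z, r)", simplified]) (use that(1) in \<open>auto intro!: continuous_intros\<close>)
  have dNf: "((\<lambda>z. Nf z r) has_derivative (\<lambda>v. A z0 r * fst v + B z0 r * snd v)) (at z0 within SS c)"
    if z0: "z0 \<in> SS c" and r: "r \<in> {0..1}" for z0 r
  proof -
    have inner: "((\<lambda>z. (fst z + snd z - snd z * r, snd z * r)) has_derivative
        (\<lambda>v. (fst v + snd v - snd v * r, snd v * r))) (at z0 within SS c)"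
      by (auto intro!: derivative_eq_intros)
    have "((\<lambda>z. (\<lambda>w. N (fst w) (snd w)) (fst z + snd z - snd z * r, snd z * r)) has_derivative
       (\<lambda>v. (\<lambda>w v. N1 (fst w) (snd w) * fst v + N2 (fst w) (snd w) * snd v)
           (fst z0 + snd z0 - snd z0 * r, snd z0 * r) (fst v + snd v - snd v * r, snd v * r)))
       (at z0 within SS c)"
      by (rule has_derivative_in_compose2[OF ND' _ z0 inner]) (use SS_L r in auto)
    then have "((\<lambda>z. Nf z r) has_derivative (\<lambda>v. N1 (fst z0 + snd z0 - snd z0 * r) (snd z0 * r) * (fst v + snd v - snd v * r)
       + N2 (fst z0 + snd z0 - snd z0 * r) (snd z0 * r) * (snd v * r))) (at z0 within SS c)"
      by (simp add: Nf_def)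
    then show ?thesis
      by (rule has_derivative_eq_rhs) (auto simp: A_def B_def C_def fun_eq_iff algebra_simps)
  qed
  have dI: "((\<lambda>z. integral {0..1} (Nf z)) has_derivative
     (\<lambda>v. integral {0..1} (A z0) * fst v + integral {0..1} (B z0) * snd v)) (at z0 within SS c)"
    if z0: "z0 \<in> SS c" for z0
    by (rule leibniz2[OF dNf _ cA cB z0 convex_SS]) (auto intro: slice cNf)
  have intg: "G z integrable_on {0..1}"
    if "z \<in> SS c" "continuous_on (SS c \<times> {0..1}) (\<lambda>w. G (fst w) (snd w))" for z and G :: "real \<times> real \<Rightarrow> real \<Rightarrow> real"
    by (rule integrable_continuous_real, rule slice[OF that])
  have subst: "integral {0..snd z} (\<lambda>s. N (fst z + snd z - s) s) = snd z * integral {0..1} (Nf z)"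
    if z: "z \<in> SS c" for z
  proof -
    obtain x t where zz: "z = (x,t)" by (cases z)
    have t: "0 \<le> t" "\<bar>x\<bar> + t \<le> c" using z by (auto simp: SS_def zz)
    have img: "(x + t - u, u) \<in> SS c" if "u \<in> {0..t}" for u
    proof -
      have "\<bar>x + (t - u)\<bar> \<le> \<bar>x\<bar> + \<bar>t - u\<bar>" by (rule abs_triangle_ineq)
      then show ?thesis using that t by (auto simp: SS_def)
    qed
    have cont: "continuous_on {0..t} (\<lambda>s. N (x+t-s) s)"
      by (rule continuous_on_compose2[OF contN, of _ "\<lambda>s. (x+t-s, s)", simplified])
        (use img in \<open>auto intro!: continuous_intros\<close>)
    have "((\<lambda>r. t *\<^sub>R N (x+t-t*r) (t*r)) has_integral integral {t*0..t*1} (\<lambda>s. N (x+t-s) s)) {0..1}"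
      apply (rule has_integral_substitution[where c=0 and d=t and g'="\<lambda>_. t"])
      using t cont by (auto intro!: derivative_eq_intros simp: mult_left_le)
    then have "integral {0..1} (\<lambda>r. t *\<^sub>R N (x+t-t*r) (t*r)) = integral {t*0..t*1} (\<lambda>s. N (x+t-s) s)"
      by (rule integral_unique)
    then show ?thesis by (simp add: zz Nf_def)
  qed
  have cF': "continuous_on (SS c) (\<lambda>z. F' (fst z + snd z))"
    by (rule continuous_on_compose2[OF cF]) (auto intro!: continuous_intros simp: SS_def abs_if split: if_splits)
  have dP: "((\<lambda>z. F (fst z + snd z) + snd z * integral {0..1} (Nf z)) has_derivative
     (\<lambda>v. F' (fst z0 + snd z0) * (fst v + snd v) + (snd z0 * (integral {0..1} (A z0) * fst v
        + integral {0..1} (B z0) * snd v) + snd v * integral {0..1} (Nf z0)))) (at z0 within SS c)"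
    if z0: "z0 \<in> SS c" for z0
  proof -
    have "\<bar>fst z0 + snd z0\<bar> \<le> c" using z0 by (auto simp: SS_def abs_if split: if_splits)
    then have "(F has_derivative (\<lambda>h. F' (fst z0 + snd z0) * h)) (at (fst z0 + snd z0))"
      using dF by (simp add: has_field_derivative_def)
    then have d1: "((\<lambda>z. F (fst z + snd z)) has_derivative (\<lambda>v. F' (fst z0 + snd z0) * (fst v + snd v))) (at z0 within SS c)"
      by (rule has_derivative_compose[rotated]) (auto intro!: derivative_eq_intros)
    have d2: "((\<lambda>z. snd z * integral {0..1} (Nf z)) has_derivative
       (\<lambda>v. snd z0 * (integral {0..1} (A z0) * fst v + integral {0..1} (B z0) * snd v) + snd v * integral {0..1} (Nf z0))) (at z0 within SS c)"
      by (rule has_derivative_mult[OF has_derivative_snd[OF has_derivative_ident] dI[OF z0]])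
    show ?thesis by (rule has_derivative_add[OF d1 d2])
  qed
  have cpar: "continuous_on (SS c) (\<lambda>z. integral {0..1} (G z))"
    if "continuous_on (SS c \<times> {0..1}) (\<lambda>w. G (fst w) (snd w))" for G :: "real \<times> real \<Rightarrow> real \<Rightarrow> real"
  proof -
    have "continuous_on (SS c \<times> cbox 0 1) (\<lambda>(z, r). G z r)"
      using that by (simp add: split_beta)
    from integral_continuous_on_param[OF this] show ?thesis by simp
  qed
  have iA: "continuous_on (SS c) (\<lambda>z. integral {0..1} (\<lambda>r. N1 (fst z + snd z - snd z * r) (snd z * r)))"
    using cpar[OF cA] by (simp add: A_def)
  have iNf: "continuous_on (SS c) (\<lambda>z. integral {0..1} (\<lambda>r. N (fst z + snd z - snd z * r) (snd z * r)))"
    using cpar[OF cNf] by (simp add: Nf_def)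
  have iB: "continuous_on (SS c) (\<lambda>z. integral {0..1} (\<lambda>r. N1 (fst z + snd z - snd z * r) (snd z * r) * (1 - r)
       + N2 (fst z + snd z - snd z * r) (snd z * r) * r))"
    using cpar[OF cB] by (simp add: B_def A_def C_def)
  show ?thesis
    unfolding HH_def
  proof (intro conjI allI impI)
    fix y s assume ys: "(y, s) \<in> SS c"
    have "((\<lambda>z. F (fst z + snd z) + integral {0..snd z} (\<lambda>u. N (fst z + snd z - u) u)) has_derivative
     (\<lambda>v. F' (fst (y,s) + snd (y,s)) * (fst v + snd v) + (snd (y,s) * (integral {0..1} (A (y,s)) * fst v
        + integral {0..1} (B (y,s)) * snd v) + snd v * integral {0..1} (Nf (y,s))))) (at (y,s) within SS c)"
      by (rule has_derivative_transform_within[OF dP[OF ys] zero_less_one ys]) (simp add: subst)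
    then show "((\<lambda>z. F (fst z + snd z) + integral {0..snd z} (\<lambda>s. N (fst z + snd z - s) s)) has_derivative
          (\<lambda>v. (F' (y + s) + s * integral {0..1} (\<lambda>r. N1 (y + s - s * r) (s * r))) * fst v +
               (F' (y + s) + integral {0..1} (\<lambda>r. N (y + s - s * r) (s * r)) +
                s * integral {0..1} (\<lambda>r. N1 (y + s - s * r) (s * r) * (1 - r) + N2 (y + s - s * r) (s * r) * r)) *
               snd v))
          (at (y, s) within SS c)"
      by (rule has_derivative_eq_rhs) (simp add: fun_eq_iff A_def B_def C_def Nf_def algebra_simps)
  next
    show "continuous_on (SS c) (\<lambda>z. F' (fst z + snd z) + snd z * integral {0..1} (\<lambda>r. N1 (fst z + snd z - snd z * r) (snd z * r)))"
      by (intro continuous_intros cF' iA)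
  next
    show "continuous_on (SS c) (\<lambda>z. F' (fst z + snd z) + integral {0..1} (\<lambda>r. N (fst z + snd z - snd z * r) (snd z * r)) +
         snd z * integral {0..1} (\<lambda>r. N1 (fst z + snd z - snd z * r) (snd z * r) * (1 - r) + N2 (fst z + snd z - snd z * r) (snd z * r) * r))"
      by (intro continuous_intros cF' iNf iB)
  next
    fix y s assume ys: "(y, s) \<in> SS c"
    have s: "0 \<le> s" "\<bar>y + s\<bar> \<le> c" using ys by (auto simp: SS_def abs_if split: if_splits)
    show "\<gamma> \<le> F (y + s) + integral {0..s} (\<lambda>u. N (y + s - u) u)"
    proof -
      have "0 \<le> s * integral {0..1} (Nf (y,s))"
        using s(1) by (intro mult_nonneg_nonneg integral_nonneg intg[OF ys cNf])
          (auto simp: Nf_def intro!: Npos SS_L[OF ys, simplified])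
      then show ?thesis using subst[OF ys] Fge[OF s(2)] by simp
    qed
    let ?z = "(y,s)"
    have dm: "((\<lambda>r. Nf ?z r) has_real_derivative (s * (C ?z r - A ?z r))) (at r within {0..1})"
      if r: "r \<in> {0..1}" for r
    proof -
      have inner: "((\<lambda>r. (y + s - s * r, s * r)) has_derivative (\<lambda>h. (- (s * h), s * h))) (at r within {0..1})"
        by (auto intro!: derivative_eq_intros)
      have "((\<lambda>r. (\<lambda>w. N (fst w) (snd w)) (y + s - s * r, s * r)) has_derivative
         (\<lambda>h. (\<lambda>w v. N1 (fst w) (snd w) * fst v + N2 (fst w) (snd w) * snd v) (y + s - s * r, s * r) (- (s * h), s * h)))
         (at r within {0..1})"
        by (rule has_derivative_in_compose2[OF ND' _ r inner]) (use SS_L[OF ys] in auto)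
      then show ?thesis unfolding has_field_derivative_def
        by (simp add: Nf_def A_def C_def) (rule has_derivative_eq_rhs, auto simp: fun_eq_iff algebra_simps)
    qed
    have dw: "((\<lambda>r. (r - 1) * Nf ?z r) has_vector_derivative (Nf ?z r + (r - 1) * (s * (C ?z r - A ?z r)))) (at r within {0..1})"
      if r: "r \<in> {0..1}" for r
    proof -
      have "((\<lambda>r. (r - 1) * Nf ?z r) has_real_derivative ((r - 1) * (s * (C ?z r - A ?z r)) + (1 - 0) * Nf ?z r)) (at r within {0..1})"
        by (rule DERIV_mult'[OF DERIV_diff[OF DERIV_ident DERIV_const] dm[OF r]])
      then show ?thesis by (simp add: has_real_derivative_iff_has_vector_derivative[symmetric] algebra_simps)
    qed
    have ftc: "((\<lambda>r. Nf ?z r + (r - 1) * (s * (C ?z r - A ?z r))) has_integral ((1 - 1) * Nf ?z 1 - (0 - 1) * Nf ?z 0)) {0..1}"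
      by (rule fundamental_theorem_of_calculus) (auto intro: dw)
    have h3: "((\<lambda>r. s * C ?z r) has_integral (s * integral {0..1} (C ?z))) {0..1}"
      by (intro has_integral_mult_right has_integral_integral[THEN iffD1] intg[OF ys cC])
    have h2: "((\<lambda>r. s * B ?z r) has_integral (s * integral {0..1} (B ?z))) {0..1}"
      by (intro has_integral_mult_right has_integral_integral[THEN iffD1] intg[OF ys cB])
    have hN: "(Nf ?z has_integral integral {0..1} (Nf ?z)) {0..1}"
      using intg[OF ys cNf] by (simp add: has_integral_integral)
    have eqf: "(\<lambda>r. Nf ?z r + s * B ?z r) = (\<lambda>r. (Nf ?z r + (r - 1) * (s * (C ?z r - A ?z r))) + s * C ?z r)"
      by (simp add: fun_eq_iff B_def algebra_simps)
    have key: "integral {0..1} (Nf ?z) + s * integral {0..1} (B ?z) = N (y + s) 0 + s * integral {0..1} (C ?z)"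
    proof -
      have "((\<lambda>r. Nf ?z r + s * B ?z r) has_integral (integral {0..1} (Nf ?z) + s * integral {0..1} (B ?z))) {0..1}"
        by (rule has_integral_add[OF hN h2])
      moreover have "((\<lambda>r. Nf ?z r + s * B ?z r) has_integral (N (y + s) 0 + s * integral {0..1} (C ?z))) {0..1}"
        unfolding eqf using has_integral_add[OF ftc h3] by (simp add: Nf_def)
      ultimately show ?thesis by (rule has_integral_unique)
    qed
    have cabsA: "continuous_on (SS c \<times> {0..1}) (\<lambda>w. \<bar>A (fst w) (snd w)\<bar>)" by (intro continuous_intros cA)
    have iabsA: "(\<lambda>r. \<bar>A ?z r\<bar>) integrable_on {0..1}" using intg[OF ys cabsA] by simp
    have absA: "\<bar>integral {0..1} (A ?z)\<bar> \<le> integral {0..1} (\<lambda>r. \<bar>A ?z r\<bar>)"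
      using integral_norm_bound_integral[OF intg[OF ys cA], of "\<lambda>r. \<bar>A ?z r\<bar>"]
        iabsA by simp
    have "integral {0..1} (\<lambda>r. (1 + eps) * \<bar>A ?z r\<bar>) \<le> integral {0..1} (C ?z)"
      by (rule integral_le[OF integrable_on_mult_right[OF iabsA] intg[OF ys cC]])
        (auto simp: A_def C_def intro!: Nineq SS_L[OF ys, simplified])
    then have IC: "(1 + eps) * \<bar>integral {0..1} (A ?z)\<bar> \<le> integral {0..1} (C ?z)"
      using absA eps by (simp add: order_trans[OF mult_left_mono])
    have m0: "(2 + eps) * \<bar>F' (y + s)\<bar> \<le> N (y + s) 0" by (rule Bd[OF s(2)])
    have fa: "(1 + eps) * \<bar>F' (y + s) + s * integral {0..1} (A ?z)\<bar> \<le> F' (y + s) + N (y + s) 0 + s * integral {0..1} (C ?z)"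
      by (rule final_arith[OF m0 IC s(1) eps])
    have eA: "integral {0..1} (A ?z) = integral {0..1} (\<lambda>r. N1 (y + s - s * r) (s * r))" by (simp add: A_def)
    have eB: "integral {0..1} (B ?z) = integral {0..1} (\<lambda>r. N1 (y + s - s * r) (s * r) * (1 - r) + N2 (y + s - s * r) (s * r) * r)"
      by (simp add: B_def A_def C_def)
    have eN: "integral {0..1} (Nf ?z) = integral {0..1} (\<lambda>r. N (y + s - s * r) (s * r))" by (simp add: Nf_def)
    show "(1 + eps) * \<bar>F' (y + s) + s * integral {0..1} (\<lambda>r. N1 (y + s - s * r) (s * r))\<bar>
       \<le> F' (y + s) + integral {0..1} (\<lambda>r. N (y + s - s * r) (s * r)) +
          s * integral {0..1} (\<lambda>r. N1 (y + s - s * r) (s * r) * (1 - r) + N2 (y + s - s * r) (s * r) * r)"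
      using fa key unfolding eA[symmetric] eB[symmetric] eN[symmetric] by linarith
  qed
qed

definition NDp :: "real \<Rightarrow> real \<Rightarrow> (real \<Rightarrow> real \<Rightarrow> real) \<Rightarrow> (real \<Rightarrow> real \<Rightarrow> real) \<Rightarrow> (real \<Rightarrow> real \<Rightarrow> real) \<Rightarrow> bool" where
  "NDp c eps N N1 N2 \<longleftrightarrow>
    (\<forall>y s. (y,s) \<in> SS c \<longrightarrow> ((\<lambda>z. N (fst z) (snd z)) has_derivative
        (\<lambda>v. N1 y s * fst v + N2 y s * snd v)) (at (y,s) within SS c)) \<and>
    continuous_on (SS c) (\<lambda>z. N1 (fst z) (snd z)) \<and>
    continuous_on (SS c) (\<lambda>z. N2 (fst z) (snd z)) \<and>
    (\<forall>y s. (y,s) \<in> SS c \<longrightarrow> 0 \<le> N y s \<and> (1 + eps) * \<bar>N1 y s\<bar> \<le> N2 y s)"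

lemma HH_D:
  assumes "HH c eps P Px Pt \<gamma>"
  shows "\<And>w. w \<in> SS c \<Longrightarrow> ((\<lambda>z. P (fst z) (snd z)) has_derivative
        (\<lambda>v. Px (fst w) (snd w) * fst v + Pt (fst w) (snd w) * snd v)) (at w within SS c)"
    and "continuous_on (SS c) (\<lambda>z. Px (fst z) (snd z))"
    and "continuous_on (SS c) (\<lambda>z. Pt (fst z) (snd z))"
    and "\<And>y s. (y,s) \<in> SS c \<Longrightarrow> \<gamma> \<le> P y s"
    and "\<And>y s. (y,s) \<in> SS c \<Longrightarrow> (1 + eps) * \<bar>Px y s\<bar> \<le> Pt y s"
proof -
  have H1: "\<forall>y s. (y,s) \<in> SS c \<longrightarrow> ((\<lambda>z. P (fst z) (snd z)) has_derivative
        (\<lambda>v. Px y s * fst v + Pt y s * snd v)) (at (y,s) within SS c)"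
    using assms unfolding HH_def by (rule conjunct1)
  have H4: "\<forall>y s. (y,s) \<in> SS c \<longrightarrow> \<gamma> \<le> P y s \<and> (1 + eps) * \<bar>Px y s\<bar> \<le> Pt y s"
    using assms unfolding HH_def by (rule conjunct2[OF conjunct2[OF conjunct2]])
  fix w assume "w \<in> SS c" then show "((\<lambda>z. P (fst z) (snd z)) has_derivative
        (\<lambda>v. Px (fst w) (snd w) * fst v + Pt (fst w) (snd w) * snd v)) (at w within SS c)"
    using H1[rule_format, of "fst w" "snd w"] by simp
next
  show "continuous_on (SS c) (\<lambda>z. Px (fst z) (snd z))"
    using assms unfolding HH_def by (rule conjunct1[OF conjunct2])
next
  show "continuous_on (SS c) (\<lambda>z. Pt (fst z) (snd z))"
    using assms unfolding HH_def by (rule conjunct1[OF conjunct2[OF conjunct2]])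
next
  fix y s assume "(y,s) \<in> SS c" then show "\<gamma> \<le> P y s" using conjunct2[OF conjunct2[OF conjunct2[OF assms[unfolded HH_def]]]] by simp
next
  fix y s assume "(y,s) \<in> SS c" then show "(1 + eps) * \<bar>Px y s\<bar> \<le> Pt y s" using conjunct2[OF conjunct2[OF conjunct2[OF assms[unfolded HH_def]]]] by simp
qed

lemma scal:
  fixes P p W X Y a b m1 mu q V :: real
  shows "P * (p * W * (X*a + Y*b)) - (m1 * (1/2 * (X*a + Y*b)) + - mu / q * b * (1/2 * V))
   = (p * P * W - m1/2) * X * a + ((p * P * W - m1/2) * Y + mu/q * (V/2)) * b"
proof -
  have e: "- mu / q = - (mu/q)" by simp
  show ?thesis unfolding e by (simp add: algebra_simps)
qed

lemma N_props:
  fixes \<Phi> \<Psi> \<Phi>x \<Phi>t \<Psi>x \<Psi>t :: "real \<Rightarrow> real \<Rightarrow> real"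
  assumes HP: "HH c eps \<Phi> \<Phi>x \<Phi>t \<gamma>1" and HQ: "HH c eps \<Psi> \<Psi>x \<Psi>t \<gamma>2"
    and p: "1 < p" and mu: "0 < \<mu>" and G: "0 < \<gamma>1 + \<gamma>2"
    and K: "\<And>u. \<gamma>1 + \<gamma>2 \<le> u \<Longrightarrow> \<mu> / 2 \<le> 2 powr (-p) * u powr (p - 1)"
    and eps: "0 \<le> eps"
  shows "NDp c eps (Nl p \<mu> \<Phi> \<Psi>)
     (\<lambda>y s. (p * 2 powr (-p) * (\<Phi> y s + \<Psi> y s) powr (p - 1) - \<mu> / (1 + s) / 2) * (\<Phi>x y s + \<Psi>x y s))
     (\<lambda>y s. (p * 2 powr (-p) * (\<Phi> y s + \<Psi> y s) powr (p - 1) - \<mu> / (1 + s) / 2) * (\<Phi>t y s + \<Psi>t y s)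
         + \<mu> / (1 + s)^2 * ((\<Phi> y s + \<Psi> y s) / 2))"
proof -
  define U where "U = (\<lambda>z. \<Phi> (fst z) (snd z) + \<Psi> (fst z) (snd z))"
  have Uge: "\<gamma>1 + \<gamma>2 \<le> U z" if "z \<in> SS c" for z
    using HH_D(4)[OF HP, of "fst z" "snd z"] HH_D(4)[OF HQ, of "fst z" "snd z"] that by (simp add: U_def)
  have Upos: "0 < U z" if "z \<in> SS c" for z using Uge[OF that] G by linarith
  have sge: "0 \<le> snd z" if "z \<in> SS c" for z using that by (simp add: SS_def)
  have UposE: "\<forall>z\<in>SS c. \<Phi> (fst z) (snd z) + \<Psi> (fst z) (snd z) \<noteq> 0" using Upos by (force simp: U_def)
  have s1: "\<forall>z\<in>SS c. 1 + snd z \<noteq> 0" using sge by force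
  have dU: "(U has_derivative (\<lambda>v. (\<Phi>x (fst w) (snd w) + \<Psi>x (fst w) (snd w)) * fst v
        + (\<Phi>t (fst w) (snd w) + \<Psi>t (fst w) (snd w)) * snd v)) (at w within SS c)"
    if w: "w \<in> SS c" for w
    unfolding U_def
    by (rule has_derivative_eq_rhs[OF has_derivative_add[OF HH_D(1)[OF HP w] HH_D(1)[OF HQ w]]])
      (simp add: fun_eq_iff algebra_simps)
  have cU: "continuous_on (SS c) U"
    by (rule has_derivative_continuous_on, rule dU)
  have cP: "continuous_on (SS c) (\<lambda>z. \<Phi> (fst z) (snd z))"
    by (rule has_derivative_continuous_on, rule HH_D(1)[OF HP])
  have cQ: "continuous_on (SS c) (\<lambda>z. \<Psi> (fst z) (snd z))"
    by (rule has_derivative_continuous_on, rule HH_D(1)[OF HQ])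
  note cPx = HH_D(2)[OF HP] and cPt = HH_D(3)[OF HP] and cQx = HH_D(2)[OF HQ] and cQt = HH_D(3)[OF HQ]
  have absp: "((\<lambda>v. \<bar>v\<bar> powr p) has_real_derivative p * u powr (p - 1)) (at u)" if "0 < u" for u :: real
    by (rule has_field_derivative_transform_within_open[OF has_real_derivative_powr[OF that] open_greaterThan[of 0]])
      (use that in auto)
  have recip: "((\<lambda>s. \<mu> / (1 + s)) has_real_derivative (- \<mu> / (1 + s)^2)) (at s)" if "0 \<le> s" for s :: real
    using that by (auto intro!: derivative_eq_intros simp: power2_eq_square field_simps)
  show ?thesis
    unfolding NDp_def
  proof (intro conjI allI impI)
    fix y s assume ys: "(y, s) \<in> SS c"
    let ?w = "(y,s)"
    have u0: "0 < U ?w" using Upos[OF ys] .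
    have s0: "0 \<le> s" using sge[OF ys] by simp
    have d1: "((\<lambda>z. \<bar>U z\<bar> powr p) has_derivative (\<lambda>v. p * U ?w powr (p - 1) * ((\<Phi>x y s + \<Psi>x y s) * fst v
        + (\<Phi>t y s + \<Psi>t y s) * snd v))) (at ?w within SS c)"
      using has_derivative_compose[OF dU[OF ys] absp[OF u0, unfolded has_field_derivative_def]]
      by (simp add: mult.assoc)
    have d2: "((\<lambda>z. \<mu> / (1 + snd z)) has_derivative (\<lambda>v. (- \<mu> / (1 + s)^2) * snd v)) (at ?w within SS c)"
    proof -
      have s0': "0 \<le> snd ?w" using s0 by simp
      have "(snd has_derivative snd) (at ?w within SS c)" by (rule has_derivative_snd[OF has_derivative_ident, simplified])
      from has_derivative_compose[OF this recip[OF s0', unfolded has_field_derivative_def]]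
      show ?thesis by simp
    qed
    have d4: "((\<lambda>z. 1/2 * U z) has_derivative (\<lambda>v. 1/2 * ((\<Phi>x y s + \<Psi>x y s) * fst v + (\<Phi>t y s + \<Psi>t y s) * snd v))) (at ?w within SS c)"
      using has_derivative_mult_right[OF dU[OF ys], of "1/2"] by simp
    note d3 = has_derivative_diff[OF has_derivative_mult_right[OF d1, of "2 powr -p"] has_derivative_mult[OF d2 d4]]
    have eqN: "Nl p \<mu> \<Phi> \<Psi> (fst z) (snd z) = 2 powr (-p) * \<bar>U z\<bar> powr p - \<mu> / (1 + snd z) * (1/2 * U z)" for z
      by (simp add: Nl_def U_def)
    show "((\<lambda>z. Nl p \<mu> \<Phi> \<Psi> (fst z) (snd z)) has_derivative
          (\<lambda>v. (p * 2 powr (-p) * (\<Phi> y s + \<Psi> y s) powr (p - 1) - \<mu> / (1 + s) / 2) * (\<Phi>x y s + \<Psi>x y s) * fst v +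
               ((p * 2 powr (-p) * (\<Phi> y s + \<Psi> y s) powr (p - 1) - \<mu> / (1 + s) / 2) * (\<Phi>t y s + \<Psi>t y s) +
                \<mu> / (1 + s)\<^sup>2 * ((\<Phi> y s + \<Psi> y s) / 2)) * snd v)) (at (y, s) within SS c)"
      unfolding eqN
      apply (rule has_derivative_eq_rhs[OF d3])
      apply (rule ext)
      apply (simp only: U_def fst_conv snd_conv)
      apply (rule scal)
      done
  next
    show "continuous_on (SS c) (\<lambda>z. (p * 2 powr - p * (\<Phi> (fst z) (snd z) + \<Psi> (fst z) (snd z)) powr (p - 1) - \<mu> / (1 + snd z) / 2) *
              (\<Phi>x (fst z) (snd z) + \<Psi>x (fst z) (snd z)))"
      using UposE s1 by (intro continuous_intros cP cQ cPx cQx) auto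
  next
    show "continuous_on (SS c) (\<lambda>z. (p * 2 powr - p * (\<Phi> (fst z) (snd z) + \<Psi> (fst z) (snd z)) powr (p - 1) - \<mu> / (1 + snd z) / 2) *
              (\<Phi>t (fst z) (snd z) + \<Psi>t (fst z) (snd z)) +
              \<mu> / (1 + snd z)\<^sup>2 * ((\<Phi> (fst z) (snd z) + \<Psi> (fst z) (snd z)) / 2))"
      using UposE s1 by (intro continuous_intros cP cQ cPt cQt) auto
  next
    fix y s assume ys: "(y, s) \<in> SS c"
    define u where "u = \<Phi> y s + \<Psi> y s"
    have ug: "\<gamma>1 + \<gamma>2 \<le> u" using Uge[OF ys] by (simp add: U_def u_def)
    have u0: "0 < u" using ug G by linarith
    have s0: "0 \<le> s" using sge[OF ys] by simp
    have X: "\<mu> / 2 \<le> 2 powr (-p) * u powr (p - 1)" by (rule K[OF ug])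
    have up: "\<bar>u\<bar> powr p = u * u powr (p - 1)"
    proof -
      have "u powr (1 + (p - 1)) = u powr 1 * u powr (p - 1)" by (rule powr_add)
      then show ?thesis using u0 by simp
    qed
    have m1: "\<mu> / (1 + s) \<le> \<mu>" using s0 mu by (simp add: divide_le_eq)
    have m1': "0 \<le> \<mu> / (1 + s)" using s0 mu by simp
    show "0 \<le> Nl p \<mu> \<Phi> \<Psi> y s"
    proof -
      have "\<mu> / (1 + s) * (u / 2) \<le> \<mu> * (u / 2)" by (rule mult_right_mono[OF m1]) (use u0 in simp)
      also have "\<dots> = u * (\<mu> / 2)" by simp
      also have "\<dots> \<le> u * (2 powr (-p) * u powr (p - 1))" using X u0 by (simp add: mult_left_mono)
      also have "\<dots> = 2 powr (-p) * \<bar>u\<bar> powr p" using up by simp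
      finally show ?thesis by (simp add: Nl_def u_def)
    qed
  next
    fix y s assume ys: "(y, s) \<in> SS c"
    define u where "u = \<Phi> y s + \<Psi> y s"
    have ug: "\<gamma>1 + \<gamma>2 \<le> u" using Uge[OF ys] by (simp add: U_def u_def)
    have u0: "0 < u" using ug G by linarith
    have s0: "0 \<le> s" using sge[OF ys] by simp
    have X: "\<mu> / 2 \<le> 2 powr (-p) * u powr (p - 1)" by (rule K[OF ug])
    have m1: "\<mu> / (1 + s) \<le> \<mu>" using s0 mu by (simp add: divide_le_eq)
    define a where "a = p * 2 powr (-p) * u powr (p - 1) - \<mu> / (1 + s) / 2"
    have "2 powr (-p) * u powr (p - 1) \<le> p * (2 powr (-p) * u powr (p - 1))"
      using p by (simp add: mult_le_cancel_right1 not_less)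
    moreover have "\<mu> / (1 + s) / 2 \<le> \<mu> / 2" by (rule divide_right_mono[OF m1]) simp
    moreover have "a = p * (2 powr (-p) * u powr (p - 1)) - \<mu> / (1 + s) / 2" by (simp add: a_def mult.assoc)
    ultimately have a0: "0 \<le> a" using X by linarith
    have i1: "(1 + eps) * \<bar>\<Phi>x y s\<bar> \<le> \<Phi>t y s" by (rule HH_D(5)[OF HP ys])
    have i2: "(1 + eps) * \<bar>\<Psi>x y s\<bar> \<le> \<Psi>t y s" by (rule HH_D(5)[OF HQ ys])
    have "(1 + eps) * \<bar>\<Phi>x y s + \<Psi>x y s\<bar> \<le> (1 + eps) * (\<bar>\<Phi>x y s\<bar> + \<bar>\<Psi>x y s\<bar>)"
      using eps by (intro mult_left_mono abs_triangle_ineq) auto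
    also have "\<dots> \<le> \<Phi>t y s + \<Psi>t y s" using i1 i2 by (simp add: distrib_left)
    finally have i3: "(1 + eps) * \<bar>\<Phi>x y s + \<Psi>x y s\<bar> \<le> \<Phi>t y s + \<Psi>t y s" .
    have "(1 + eps) * \<bar>a * (\<Phi>x y s + \<Psi>x y s)\<bar> = a * ((1 + eps) * \<bar>\<Phi>x y s + \<Psi>x y s\<bar>)"
      using a0 by (simp add: abs_mult)
    also have "\<dots> \<le> a * (\<Phi>t y s + \<Psi>t y s)" using a0 i3 by (rule mult_left_mono[rotated])
    also have "\<dots> \<le> a * (\<Phi>t y s + \<Psi>t y s) + \<mu> / (1 + s)\<^sup>2 * (u / 2)"
      using mu u0 by simp
    finally show "(1 + eps) * \<bar>(p * 2 powr - p * (\<Phi> y s + \<Psi> y s) powr (p - 1) - \<mu> / (1 + s) / 2) * (\<Phi>x y s + \<Psi>x y s)\<bar>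
       \<le> (p * 2 powr - p * (\<Phi> y s + \<Psi> y s) powr (p - 1) - \<mu> / (1 + s) / 2) * (\<Phi>t y s + \<Psi>t y s) +
          \<mu> / (1 + s)\<^sup>2 * ((\<Phi> y s + \<Psi> y s) / 2)"
      by (simp add: a_def u_def)
  qed
qed

lemma HH_refl:
  assumes H: "HH c eps P Px Pt \<gamma>"
  shows "HH c eps (\<lambda>y s. P (- y) s) (\<lambda>y s. - Px (- y) s) (\<lambda>y s. Pt (- y) s) \<gamma>"
proof -
  have mem: "(- y, s) \<in> SS c" if "(y,s) \<in> SS c" for y s using that by (simp add: SS_def)
  have img: "(\<lambda>z. (- fst z, snd z)) ` SS c \<subseteq> SS c" by (auto simp: SS_def)
  show ?thesis unfolding HH_def
  proof (intro conjI allI impI)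
    fix y s assume ys: "(y,s) \<in> SS c"
    have inner: "((\<lambda>z. (- fst z, snd z)) has_derivative (\<lambda>v. (- fst v, snd v))) (at (y,s) within SS c)"
      by (auto intro!: derivative_eq_intros)
    have "((\<lambda>z. (\<lambda>w. P (fst w) (snd w)) (- fst z, snd z)) has_derivative
       (\<lambda>v. (\<lambda>w v. Px (fst w) (snd w) * fst v + Pt (fst w) (snd w) * snd v) (- fst (y,s), snd (y,s)) (- fst v, snd v)))
       (at (y,s) within SS c)"
      by (rule has_derivative_in_compose2[OF HH_D(1)[OF H] img ys inner])
    then show "((\<lambda>z. P (- fst z) (snd z)) has_derivative (\<lambda>v. - Px (- y) s * fst v + Pt (- y) s * snd v)) (at (y, s) within SS c)"
      by simp
  next
    have "continuous_on (SS c) (\<lambda>z. (\<lambda>w. Px (fst w) (snd w)) (- fst z, snd z))"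
      by (rule continuous_on_compose2[OF HH_D(2)[OF H] _ img]) (auto intro!: continuous_intros)
    then show "continuous_on (SS c) (\<lambda>z. - Px (- fst z) (snd z))"
      by (simp add: continuous_on_minus)
  next
    have "continuous_on (SS c) (\<lambda>z. (\<lambda>w. Pt (fst w) (snd w)) (- fst z, snd z))"
      by (rule continuous_on_compose2[OF HH_D(3)[OF H] _ img]) (auto intro!: continuous_intros)
    then show "continuous_on (SS c) (\<lambda>z. Pt (- fst z) (snd z))"
      by simp
  next
    fix y s assume ys: "(y,s) \<in> SS c"
    show "\<gamma> \<le> P (- y) s" by (rule HH_D(4)[OF H mem[OF ys]])
  next
    fix y s assume ys: "(y,s) \<in> SS c"
    show "(1 + eps) * \<bar>- Px (- y) s\<bar> \<le> Pt (- y) s" using HH_D(5)[OF H mem[OF ys]] by simp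
  qed
qed

lemma char_step':
  assumes ND: "NDp c eps N N1 N2"
    and dF: "\<And>y. \<bar>y\<bar> \<le> c \<Longrightarrow> (F has_real_derivative F' y) (at y)"
    and cF: "continuous_on {-c..c} F'"
    and Fge: "\<And>y. \<bar>y\<bar> \<le> c \<Longrightarrow> \<gamma> \<le> F y"
    and Bd: "\<And>y. \<bar>y\<bar> \<le> c \<Longrightarrow> (2+eps) * \<bar>F' y\<bar> \<le> N y 0"
    and eps: "0 \<le> eps"
  shows "\<exists>A B. HH c eps (\<lambda>x t. F (x+t) + integral {0..t} (\<lambda>s. N (x+t-s) s)) A B \<gamma>"
proof -
  have D: "\<forall>y s. (y,s) \<in> SS c \<longrightarrow> ((\<lambda>z. N (fst z) (snd z)) has_derivative
        (\<lambda>v. N1 y s * fst v + N2 y s * snd v)) (at (y,s) within SS c)"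
    using ND unfolding NDp_def by (rule conjunct1)
  have c1: "continuous_on (SS c) (\<lambda>z. N1 (fst z) (snd z))"
    using ND unfolding NDp_def by (rule conjunct1[OF conjunct2])
  have c2: "continuous_on (SS c) (\<lambda>z. N2 (fst z) (snd z))"
    using ND unfolding NDp_def by (rule conjunct1[OF conjunct2[OF conjunct2]])
  have B: "\<forall>y s. (y,s) \<in> SS c \<longrightarrow> 0 \<le> N y s \<and> (1 + eps) * \<bar>N1 y s\<bar> \<le> N2 y s"
    using ND unfolding NDp_def by (rule conjunct2[OF conjunct2[OF conjunct2]])
  show ?thesis
    apply (rule exI, rule exI, rule char_step[where ?N1.0=N1 and ?N2.0=N2 and N=N and c=c and eps=eps and F=F and F'=F' and \<gamma>=\<gamma>])
    using D apply blast
    apply (rule c1)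
    apply (rule c2)
    using B apply blast
    using B apply blast
    apply (erule dF)
    apply (rule cF)
    apply (erule Fge)
    apply (erule Bd)
    apply (rule eps)
    done
qed

lemma final_part:
  assumes H: "HH c eps P Px Pt \<gamma>" and t: "0 < t" and xt: "\<bar>x\<bar> + t < c"
  shows "\<exists>Dt Dx. ((\<lambda>s. P x s) has_real_derivative Dt) (at t) \<and>
                 ((\<lambda>y. P y t) has_real_derivative Dx) (at x) \<and> Dt \<ge> (1 + eps) * \<bar>Dx\<bar>"
proof -
  define Op where "Op = {z::real\<times>real. 0 < snd z} \<inter> {z. \<bar>fst z\<bar> + snd z < c}"
  have "open Op" unfolding Op_def
    by (intro open_Int open_Collect_less continuous_intros)
  moreover have "Op \<subseteq> SS c" by (auto simp: Op_def SS_def)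
  ultimately have "Op \<subseteq> interior (SS c)" by (rule interior_maximal[rotated])
  moreover have "(x,t) \<in> Op" using t xt by (simp add: Op_def)
  ultimately have int: "(x,t) \<in> interior (SS c)" by blast
  then have xS: "(x,t) \<in> SS c" using interior_subset by blast
  have d: "((\<lambda>z. P (fst z) (snd z)) has_derivative (\<lambda>v. Px x t * fst v + Pt x t * snd v)) (at (x,t))"
    using HH_D(1)[OF H xS] at_within_interior[OF int] by simp
  have i1: "((\<lambda>s. (x,s)) has_derivative (\<lambda>h. (0,h))) (at t)"
    by (auto intro!: derivative_eq_intros)
  have "((\<lambda>s. (\<lambda>z. P (fst z) (snd z)) (x,s)) has_derivative (\<lambda>h. (\<lambda>v. Px x t * fst v + Pt x t * snd v) (0,h))) (at t)"
    by (rule has_derivative_compose[OF i1 d])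
  then have dt: "((\<lambda>s. P x s) has_real_derivative Pt x t) (at t)"
    by (simp add: has_field_derivative_def mult_commute_abs)
  have i2: "((\<lambda>y. (y,t)) has_derivative (\<lambda>h. (h,0))) (at x)"
    by (auto intro!: derivative_eq_intros)
  have "((\<lambda>y. (\<lambda>z. P (fst z) (snd z)) (y,t)) has_derivative (\<lambda>h. (\<lambda>v. Px x t * fst v + Pt x t * snd v) (h,0))) (at x)"
    by (rule has_derivative_compose[OF i2 d])
  then have dx: "((\<lambda>y. P y t) has_real_derivative Px x t) (at x)"
    by (simp add: has_field_derivative_def mult_commute_abs)
  show ?thesis using dt dx HH_D(5)[OF H xS] by blast
qed

lemma phi_0: "phi p \<mu> f g \<gamma>1 \<gamma>2 0 = (\<lambda>x t. \<gamma>1)" by (simp add: phi_def)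
lemma psi_0: "psi p \<mu> f g \<gamma>1 \<gamma>2 0 = (\<lambda>x t. \<gamma>2)" by (simp add: psi_def)
lemma phi_Suc: "phi p \<mu> f g \<gamma>1 \<gamma>2 (Suc n) = (\<lambda>x t. f (x + t) + integral {0..t}
   (\<lambda>s. Nl p \<mu> (phi p \<mu> f g \<gamma>1 \<gamma>2 n) (psi p \<mu> f g \<gamma>1 \<gamma>2 n) (x + t - s) s))"
  by (simp add: phi_def psi_def Let_def)
lemma psi_Suc: "psi p \<mu> f g \<gamma>1 \<gamma>2 (Suc n) = (\<lambda>x t. g (x - t) + integral {0..t}
   (\<lambda>s. Nl p \<mu> (phi p \<mu> f g \<gamma>1 \<gamma>2 n) (psi p \<mu> f g \<gamma>1 \<gamma>2 n) (x - t + s) s))"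
  by (simp add: phi_def psi_def Let_def)

lemma HH_const: "HH c eps (\<lambda>x t. a) (\<lambda>x t. 0) (\<lambda>x t. 0) a"
  unfolding HH_def by (auto intro!: derivative_eq_intros continuous_intros)

theorem lemma4p2:
  fixes p \<mu> R T \<gamma>1 \<gamma>2 \<epsilon>0 :: real and f g :: "real \<Rightarrow> real"
  assumes p: "p > 1" and mu: "\<mu> > 0" and pmu: "p < 1 + 2 / \<mu>"
    and R: "R > 0" and T: "T > 0"
    and g1: "\<gamma>1 > 0" and g2: "\<gamma>2 > 0"
    and gsum: "\<gamma>1 + \<gamma>2 > max 1 ((\<mu> * p * 2 powr p) powr (1 / (p - 1)))"
    and A2: "\<forall>x. \<bar>x\<bar> < R + T \<longrightarrow> f x \<ge> \<gamma>1 \<and> g x \<ge> \<gamma>2"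
    and A3: "C4_on {-(R + T)..R + T} f" "C4_on {-(R + T)..R + T} g"
    and eps: "\<epsilon>0 > 0"
    and A4: "\<forall>x. \<bar>x\<bar> < R + T \<longrightarrow>
        2 powr (-p) * (\<gamma>1 + \<gamma>2) powr p - \<mu> / 2 * (\<gamma>1 + \<gamma>2)
          \<ge> (2 + \<epsilon>0) * (\<bar>deriv f x\<bar> + \<bar>deriv g x\<bar>)"
    and xt: "(x, t) \<in> Kcone R T"
  shows "(\<exists>Dt Dx. ((\<lambda>s. phi p \<mu> f g \<gamma>1 \<gamma>2 n x s) has_real_derivative Dt) (at t) \<and>
                 ((\<lambda>y. phi p \<mu> f g \<gamma>1 \<gamma>2 n y t) has_real_derivative Dx) (at x) \<and>
                 Dt \<ge> (1 + \<epsilon>0) * \<bar>Dx\<bar>) \<and>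
         (\<exists>Dt Dx. ((\<lambda>s. psi p \<mu> f g \<gamma>1 \<gamma>2 n x s) has_real_derivative Dt) (at t) \<and>
                 ((\<lambda>y. psi p \<mu> f g \<gamma>1 \<gamma>2 n y t) has_real_derivative Dx) (at x) \<and>
                 Dt \<ge> (1 + \<epsilon>0) * \<bar>Dx\<bar>)"
proof -
  obtain x0 where x0: "\<bar>x0\<bar> < R" "\<bar>x - x0\<bar> < T - t" and t0: "0 < t"
    using xt by (auto simp: Kcone_def)
  have "\<bar>x\<bar> \<le> \<bar>x0\<bar> + \<bar>x - x0\<bar>" using abs_triangle_ineq[of x0 "x - x0"] by simp
  then have xtL: "\<bar>x\<bar> + t < R + T" using x0 by linarith
  define c where "c = (\<bar>x\<bar> + t + (R + T)) / 2"
  have cL: "c < R + T" and xtc: "\<bar>x\<bar> + t < c" using xtL by (auto simp: c_def)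
  obtain Fs where Fs0: "Fs 0 = f" and Fs: "\<forall>k<4. \<forall>y\<in>{-(R+T)..R+T}. (Fs k has_real_derivative Fs (Suc k) y) (at y within {-(R+T)..R+T})"
    using A3(1) unfolding C4_on_def by (elim exE conjE) (rule that; assumption)
  obtain Gs where Gs0: "Gs 0 = g" and Gs: "\<forall>k<4. \<forall>y\<in>{-(R+T)..R+T}. (Gs k has_real_derivative Gs (Suc k) y) (at y within {-(R+T)..R+T})"
    using A3(2) unfolding C4_on_def by (elim exE conjE) (rule that; assumption)
  define f1 where "f1 = Fs (Suc 0)"
  define g1 where "g1 = Gs (Suc 0)"
  have df: "(f has_real_derivative f1 y) (at y)" if "\<bar>y\<bar> < R + T" for y
  proof -
    have ym: "y \<in> {-(R+T)..R+T}" using that by (simp add: abs_less_iff)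
    have "(Fs 0 has_real_derivative Fs (Suc 0) y) (at y within {-(R+T)..R+T})" using Fs[rule_format, of 0 y, OF _ ym] by simp
    then have d: "(f has_real_derivative f1 y) (at y within {-(R+T)..R+T})" by (simp only: Fs0 f1_def)
    have "y \<in> interior {-(R+T)..R+T}" using that by (simp add: abs_less_iff)
    then have "at y within {-(R+T)..R+T} = at y" by (rule at_within_interior)
    with d show ?thesis by (simp only:)
  qed
  have dg: "(g has_real_derivative g1 y) (at y)" if "\<bar>y\<bar> < R + T" for y
  proof -
    have ym: "y \<in> {-(R+T)..R+T}" using that by (simp add: abs_less_iff)
    have "(Gs 0 has_real_derivative Gs (Suc 0) y) (at y within {-(R+T)..R+T})" using Gs[rule_format, of 0 y, OF _ ym] by simp
    then have d: "(g has_real_derivative g1 y) (at y within {-(R+T)..R+T})" by (simp only: Gs0 g1_def)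
    have "y \<in> interior {-(R+T)..R+T}" using that by (simp add: abs_less_iff)
    then have "at y within {-(R+T)..R+T} = at y" by (rule at_within_interior)
    with d show ?thesis by (simp only:)
  qed
  have cf1: "continuous_on {-(R+T)..R+T} f1"
    unfolding f1_def
  proof (rule DERIV_continuous_on)
    fix y assume "y \<in> {-(R+T)..R+T}"
    then show "(Fs (Suc 0) has_field_derivative Fs (Suc (Suc 0)) y) (at y within {-(R+T)..R+T})"
      using Fs[rule_format, of "Suc 0" y] by simp
  qed
  have cg1: "continuous_on {-(R+T)..R+T} g1"
    unfolding g1_def
  proof (rule DERIV_continuous_on)
    fix y assume "y \<in> {-(R+T)..R+T}"
    then show "(Gs (Suc 0) has_field_derivative Gs (Suc (Suc 0)) y) (at y within {-(R+T)..R+T})"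
      using Gs[rule_format, of "Suc 0" y] by simp
  qed
  have derivf: "deriv f y = f1 y" if "\<bar>y\<bar> < R + T" for y by (rule DERIV_imp_deriv[OF df[OF that]])
  have derivg: "deriv g y = g1 y" if "\<bar>y\<bar> < R + T" for y by (rule DERIV_imp_deriv[OF dg[OF that]])
  have Gpos: "0 < \<gamma>1 + \<gamma>2" using g1 g2 by simp
  have eps0: "0 \<le> \<epsilon>0" using eps by simp
  define M where "M = (\<mu> * p * 2 powr p) powr (1 / (p - 1))"
  have GM: "M < \<gamma>1 + \<gamma>2" using gsum by (simp add: M_def)
  have MP: "M powr (p - 1) = \<mu> * p * 2 powr p"
    unfolding M_def using p mu by (simp add: powr_powr)
  have K: "\<mu> / 2 \<le> 2 powr (-p) * u powr (p - 1)" if u: "\<gamma>1 + \<gamma>2 \<le> u" for u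
  proof -
    have M0: "0 \<le> M" by (simp add: M_def)
    have "M powr (p - 1) \<le> u powr (p - 1)" using powr_mono2[of "p - 1" M u] M0 GM u p by simp
    then have "\<mu> * p * 2 powr p \<le> u powr (p - 1)" using MP by simp
    then have l: "2 powr (-p) * (\<mu> * p * 2 powr p) \<le> 2 powr (-p) * u powr (p - 1)" by (simp add: mult_left_mono)
    have e: "2 powr (-p) * 2 powr p = (1::real)" by (simp add: powr_add[symmetric])
    have "2 powr (-p) * (\<mu> * p * 2 powr p) = \<mu> * p * (2 powr (-p) * 2 powr p)" by (simp add: algebra_simps)
    then have e2: "2 powr (-p) * (\<mu> * p * 2 powr p) = \<mu> * p" using e by simp
    have "\<mu> * 1 \<le> \<mu> * p" using p mu by (intro mult_left_mono) auto
    then show ?thesis using l e2 mu by linarith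
  qed
  have Qm: "2 powr (-p) * (\<gamma>1 + \<gamma>2) powr p - \<mu> / 2 * (\<gamma>1 + \<gamma>2) \<le> 2 powr (-p) * \<bar>v\<bar> powr p - \<mu> / (1 + 0) * (v / 2)"
    if v: "\<gamma>1 + \<gamma>2 \<le> v" for v
  proof -
    define Q where "Q = (\<lambda>w::real. 2 powr (-p) * w powr p - \<mu> * (w / 2))"
    have "Q (\<gamma>1 + \<gamma>2) \<le> Q v"
    proof (rule DERIV_nonneg_imp_increasing_open[OF v])
      fix w assume w: "\<gamma>1 + \<gamma>2 < w" "w < v"
      have w0: "0 < w" using w Gpos by linarith
      have hp: "((\<lambda>w. w powr p) has_real_derivative p * w powr (p - 1)) (at w)"
        by (rule has_real_derivative_powr[OF w0])
      have "(Q has_real_derivative (2 powr (-p) * (p * w powr (p - 1)) - \<mu> * (1 / 2))) (at w)"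
        unfolding Q_def by (rule DERIV_diff[OF DERIV_cmult[OF hp] DERIV_cmult[OF DERIV_cdivide[OF DERIV_ident]]])
      moreover have "0 \<le> 2 powr (-p) * (p * w powr (p - 1)) - \<mu> * (1 / 2)"
      proof -
        have Y: "\<mu> / 2 \<le> 2 powr (-p) * w powr (p - 1)" using K[of w] w by simp
        have "2 powr (-p) * w powr (p - 1) \<le> p * (2 powr (-p) * w powr (p - 1))"
          using p by (simp add: mult_le_cancel_right1 not_less)
        moreover have "2 powr (-p) * (p * w powr (p - 1)) = p * (2 powr (-p) * w powr (p - 1))" by simp
        ultimately show ?thesis using Y by linarith
      qed
      ultimately show "\<exists>y. (Q has_real_derivative y) (at w) \<and> 0 \<le> y" by blast
    next
      show "continuous_on {\<gamma>1 + \<gamma>2..v} Q" unfolding Q_def using Gpos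
        by (intro continuous_intros) auto
    qed
    moreover have "Q (\<gamma>1 + \<gamma>2) = 2 powr (-p) * (\<gamma>1 + \<gamma>2) powr p - \<mu> / 2 * (\<gamma>1 + \<gamma>2)" by (simp add: Q_def)
    moreover have "Q v = 2 powr (-p) * \<bar>v\<bar> powr p - \<mu> / (1 + 0) * (v / 2)" using v Gpos by (simp add: Q_def)
    ultimately show ?thesis by simp
  qed
  have Bn: "(2 + \<epsilon>0) * (\<bar>f1 y\<bar> + \<bar>g1 y\<bar>) \<le> Nl p \<mu> (phi p \<mu> f g \<gamma>1 \<gamma>2 n) (psi p \<mu> f g \<gamma>1 \<gamma>2 n) y 0"
    if y: "\<bar>y\<bar> \<le> c" for n y
  proof -
    have yL: "\<bar>y\<bar> < R + T" using y cL by linarith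
    have u: "\<gamma>1 + \<gamma>2 \<le> phi p \<mu> f g \<gamma>1 \<gamma>2 n y 0 + psi p \<mu> f g \<gamma>1 \<gamma>2 n y 0"
    proof (cases n)
      case 0 then show ?thesis by (simp add: phi_0 psi_0)
    next
      case (Suc m) then show ?thesis using A2[rule_format, OF yL] by (simp add: phi_Suc psi_Suc)
    qed
    have "(2 + \<epsilon>0) * (\<bar>f1 y\<bar> + \<bar>g1 y\<bar>) \<le> 2 powr (-p) * (\<gamma>1 + \<gamma>2) powr p - \<mu> / 2 * (\<gamma>1 + \<gamma>2)"
      using A4[rule_format, OF yL] derivf[OF yL] derivg[OF yL] by simp
    also have "\<dots> \<le> Nl p \<mu> (phi p \<mu> f g \<gamma>1 \<gamma>2 n) (psi p \<mu> f g \<gamma>1 \<gamma>2 n) y 0"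
      using Qm[OF u] by (simp add: Nl_def)
    finally show ?thesis .
  qed
  have dF: "(f has_real_derivative f1 y) (at y)" if "\<bar>y\<bar> \<le> c" for y by (rule df) (use that cL in linarith)
  have cF: "continuous_on {-c..c} f1" by (rule continuous_on_subset[OF cf1]) (use cL in auto)
  have Fge: "\<gamma>1 \<le> f y" if "\<bar>y\<bar> \<le> c" for y
  proof -
    have "\<bar>y\<bar> < R + T" using that cL by linarith
    then show ?thesis using A2 by blast
  qed
  have dG: "((\<lambda>y. g (- y)) has_real_derivative - g1 (- y)) (at y)" if "\<bar>y\<bar> \<le> c" for y
    by (rule DERIV_mirror[THEN iffD1], rule dg) (use that cL in simp)
  have cG: "continuous_on {-c..c} (\<lambda>y. - g1 (- y))"
  proof -
    have "continuous_on {-c..c} (\<lambda>y. g1 (- y))"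
      by (rule continuous_on_compose2[OF cg1]) (use cL in \<open>auto intro!: continuous_intros\<close>)
    then show ?thesis by (rule continuous_on_minus)
  qed
  have Gge: "\<gamma>2 \<le> g (- y)" if "\<bar>y\<bar> \<le> c" for y
  proof -
    have "\<bar>- y\<bar> < R + T" using that cL by simp
    then show ?thesis using A2 by blast
  qed
  have IH: "\<exists>Px Pt Qx Qt. HH c \<epsilon>0 (phi p \<mu> f g \<gamma>1 \<gamma>2 n) Px Pt \<gamma>1 \<and> HH c \<epsilon>0 (psi p \<mu> f g \<gamma>1 \<gamma>2 n) Qx Qt \<gamma>2" for n
  proof (induction n)
    case 0 show ?case unfolding phi_0 psi_0 using HH_const[of c \<epsilon>0 \<gamma>1] HH_const[of c \<epsilon>0 \<gamma>2] by blast
  next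
    case (Suc n)
    then obtain Px Pt Qx Qt where HP: "HH c \<epsilon>0 (phi p \<mu> f g \<gamma>1 \<gamma>2 n) Px Pt \<gamma>1"
      and HQ: "HH c \<epsilon>0 (psi p \<mu> f g \<gamma>1 \<gamma>2 n) Qx Qt \<gamma>2" by blast
    obtain N1 N2 where ND: "NDp c \<epsilon>0 (Nl p \<mu> (phi p \<mu> f g \<gamma>1 \<gamma>2 n) (psi p \<mu> f g \<gamma>1 \<gamma>2 n)) N1 N2"
      using N_props[OF HP HQ p mu Gpos K eps0] by blast
    have BdF: "(2 + \<epsilon>0) * \<bar>f1 y\<bar> \<le> Nl p \<mu> (phi p \<mu> f g \<gamma>1 \<gamma>2 n) (psi p \<mu> f g \<gamma>1 \<gamma>2 n) y 0"
      if "\<bar>y\<bar> \<le> c" for y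
    proof -
      have "(2 + \<epsilon>0) * \<bar>f1 y\<bar> \<le> (2 + \<epsilon>0) * (\<bar>f1 y\<bar> + \<bar>g1 y\<bar>)" using eps0 by (intro mult_left_mono) auto
      then show ?thesis using Bn[OF that, of n] by linarith
    qed
    have "\<exists>A B. HH c \<epsilon>0 (\<lambda>x t. f (x + t) + integral {0..t}
       (\<lambda>s. Nl p \<mu> (phi p \<mu> f g \<gamma>1 \<gamma>2 n) (psi p \<mu> f g \<gamma>1 \<gamma>2 n) (x + t - s) s)) A B \<gamma>1"
      by (rule char_step'[OF ND dF cF Fge BdF eps0])
    then obtain A B where HA: "HH c \<epsilon>0 (phi p \<mu> f g \<gamma>1 \<gamma>2 (Suc n)) A B \<gamma>1"
      unfolding phi_Suc by blast
    obtain N1' N2' where NDr: "NDp c \<epsilon>0 (Nl p \<mu> (\<lambda>y s. phi p \<mu> f g \<gamma>1 \<gamma>2 n (- y) s) (\<lambda>y s. psi p \<mu> f g \<gamma>1 \<gamma>2 n (- y) s)) N1' N2'"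
      using N_props[OF HH_refl[OF HP] HH_refl[OF HQ] p mu Gpos K eps0] by blast
    have Nlr: "Nl p \<mu> (\<lambda>y s. phi p \<mu> f g \<gamma>1 \<gamma>2 n (- y) s) (\<lambda>y s. psi p \<mu> f g \<gamma>1 \<gamma>2 n (- y) s) y s
       = Nl p \<mu> (phi p \<mu> f g \<gamma>1 \<gamma>2 n) (psi p \<mu> f g \<gamma>1 \<gamma>2 n) (- y) s" for y s
      by (simp add: Nl_def)
    have BdG: "(2 + \<epsilon>0) * \<bar>- g1 (- y)\<bar> \<le> Nl p \<mu> (\<lambda>y s. phi p \<mu> f g \<gamma>1 \<gamma>2 n (- y) s) (\<lambda>y s. psi p \<mu> f g \<gamma>1 \<gamma>2 n (- y) s) y 0"
      if "\<bar>y\<bar> \<le> c" for y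
    proof -
      have my: "\<bar>- y\<bar> \<le> c" using that by simp
      have "(2 + \<epsilon>0) * \<bar>g1 (- y)\<bar> \<le> (2 + \<epsilon>0) * (\<bar>f1 (- y)\<bar> + \<bar>g1 (- y)\<bar>)" using eps0 by (intro mult_left_mono) auto
      then show ?thesis using Bn[OF my, of n] unfolding Nlr by simp
    qed
    have "\<exists>A B. HH c \<epsilon>0 (\<lambda>x t. g (- (x + t)) + integral {0..t}
       (\<lambda>s. Nl p \<mu> (\<lambda>y s. phi p \<mu> f g \<gamma>1 \<gamma>2 n (- y) s) (\<lambda>y s. psi p \<mu> f g \<gamma>1 \<gamma>2 n (- y) s) (x + t - s) s)) A B \<gamma>2"
      by (rule char_step'[OF NDr dG cG Gge BdG eps0])
    then obtain A' B' where HB0: "HH c \<epsilon>0 (\<lambda>x t. g (- (x + t)) + integral {0..t}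
       (\<lambda>s. Nl p \<mu> (\<lambda>y s. phi p \<mu> f g \<gamma>1 \<gamma>2 n (- y) s) (\<lambda>y s. psi p \<mu> f g \<gamma>1 \<gamma>2 n (- y) s) (x + t - s) s)) A' B' \<gamma>2"
      by blast
    have e1: "- (- y + s - u) = y - s + u" for y s u :: real by simp
    have e2: "- (- y + s) = y - s" for y s :: real by simp
    have eq: "(\<lambda>y s. g (- (- y + s)) + integral {0..s}
       (\<lambda>u. Nl p \<mu> (\<lambda>y s. phi p \<mu> f g \<gamma>1 \<gamma>2 n (- y) s) (\<lambda>y s. psi p \<mu> f g \<gamma>1 \<gamma>2 n (- y) s) (- y + s - u) u))
       = psi p \<mu> f g \<gamma>1 \<gamma>2 (Suc n)"
      by (simp only: psi_Suc Nlr e1 e2)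
    have HB: "HH c \<epsilon>0 (psi p \<mu> f g \<gamma>1 \<gamma>2 (Suc n)) (\<lambda>y s. - A' (- y) s) (\<lambda>y s. B' (- y) s) \<gamma>2"
      using HH_refl[OF HB0] unfolding eq .
    show ?case using HA HB by blast
  qed
  obtain Px Pt Qx Qt where HP: "HH c \<epsilon>0 (phi p \<mu> f g \<gamma>1 \<gamma>2 n) Px Pt \<gamma>1"
    and HQ: "HH c \<epsilon>0 (psi p \<mu> f g \<gamma>1 \<gamma>2 n) Qx Qt \<gamma>2" using IH[of n] by blast
  show ?thesis using final_part[OF HP t0 xtc] final_part[OF HQ t0 xtc] by blast
qed

end
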